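(* Let $\sigma$ be the spectral measure of the Thue–Morse sequence. Then $\sigma^{(p)}\perp\sigma^{(q)}$ for any two distinct odd positive integers $p\neq q$.
   Context: Let $s_2(n)$ be the number of $1$s in the binary expansion of $n\ge0$ and $m_n=(-1)^{s_2(n)}$. The spectral measure $\sigma$ is the probability measure on the unit circle with Fourier coefficients $\hat\sigma(k)=\lim_{N\to\infty}\frac1N\sum_{n=1}^N m_{n+k}m_n$ for $k\ge0$ and $\hat\sigma(-k)=\hat\sigma(k)$. For $m\ge1$, $\sigma^{(m)}$ is the image of $\sigma$ under $z\mapsto z^m$. *)

theory Defs
  imports "HOL-Probability.Probability"
begin

fun s2 :: "nat \<Rightarrow> nat" where
  "s2 n = (if n = 0 then 0 else n mod 2 + s2 (n div 2))"

definition tm :: "nat \<Rightarrow> real" where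
  "tm n = (-1) ^ s2 n"

text \<open>sigma is the spectral measure of the Thue--Morse sequence: a probability
  measure on the Borel sets of the complex plane, concentrated on the unit circle,
  whose Fourier coefficients hat sigma(k) = integral of conj(z)^k, for k >= 0, equal the
  correlation limits lim (1/N) sum_{n=1}^N m_{n+k} m_n, and hat sigma(-k) = hat sigma(k).\<close>
definition TM_spectral_measure :: "complex measure \<Rightarrow> bool" where
  "TM_spectral_measure \<sigma> \<longleftrightarrow>
     sets \<sigma> = sets borel \<and> prob_space \<sigma> \<and> \<sigma> (sphere 0 1) = 1 \<and>
     (\<forall>k::nat.
        ((\<lambda>N. complex_of_real ((1 / real N) * (\<Sum>n=1..N. tm (n + k) * tm n)))
            \<longlonglongrightarrow> (\<integral>z. (cnj z) ^ k \<partial>\<sigma>)) \<and>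
        (\<integral>z. z ^ k \<partial>\<sigma>) = (\<integral>z. (cnj z) ^ k \<partial>\<sigma>))"

text \<open>Image measure sigma^(m) of sigma under z \<mapsto> z^m.\<close>
definition power_image :: "complex measure \<Rightarrow> nat \<Rightarrow> complex measure" where
  "power_image \<sigma> m = distr \<sigma> borel (\<lambda>z. z ^ m)"

definition mutually_singular :: "'a measure \<Rightarrow> 'a measure \<Rightarrow> bool" where
  "mutually_singular \<mu> \<nu> \<longleftrightarrow>
     (\<exists>A \<in> sets \<mu>. \<mu> A = 0 \<and> \<nu> (space \<nu> - A) = 0)"

end

theory Submission
  imports Defs "HOL-Number_Theory.Number_Theory"
begin


locale gseq =
  fixes g :: "nat \<Rightarrow> real"
  assumes g0: "g 0 = 1"
    and gev: "\<And>k. g (2*k) = g k"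
    and god: "\<And>k. g (2*k+1) = -(g k + g (k+1))/2"
begin

lemma g1: "g 1 = -1/3"
  using god[of 0] g0 by simp

lemma gbound: "\<bar>g n\<bar> \<le> 1"
proof (induction n rule: less_induct)
  case (less n)
  show ?case
  proof (cases "n \<le> 1")
    case True
    then have "n = 0 \<or> n = 1" by auto
    then show ?thesis using g0 g1 by auto
  next
    case False
    obtain k d where nk: "n = 2*k + d" "d < 2" by (metis mod_less_divisor mult_div_mod_eq zero_less_numeral)
    have "k < n" using nk False by auto
    show ?thesis
    proof (cases "d = 0")
      case True
      then show ?thesis using nk gev less[OF \<open>k<n\<close>] by simp
    next
      case False
      then have d1: "d = 1" using nk by simp
      have "k + 1 < n" using nk d1 \<open>\<not> n \<le> 1\<close> by auto
      then show ?thesis using nk d1 god[of k] less[OF \<open>k<n\<close>] less[of "k+1"] by (simp add: abs_le_iff)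
    qed
  qed
qed

lemma gpow2: "g (2^m * n) = g n"
  by (induction m) (auto simp: mult.assoc gev)

definition gz :: "int \<Rightarrow> real" where "gz i = g (nat \<bar>i\<bar>)"

lemma gz_ev: "gz (2*c) = gz c"
  unfolding gz_def by (simp add: abs_mult nat_mult_distrib gev)

lemma gz_od: "gz (2*c+1) = -(gz c + gz (c+1))/2"
proof (cases "c \<ge> 0")
  case True
  then have "nat \<bar>2*c+1\<bar> = 2*nat c + 1" "nat \<bar>c+1\<bar> = nat c + 1" "nat \<bar>c\<bar> = nat c" by auto
  then show ?thesis unfolding gz_def using god by simp
next
  case False
  define j where "j = nat (-c-1)"
  have "nat \<bar>2*c+1\<bar> = 2*j + 1" "nat \<bar>c+1\<bar> = j" "nat \<bar>c\<bar> = j+1" using False unfolding j_def by auto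
  then show ?thesis unfolding gz_def using god[of j] by simp
qed

lemma gz_bound: "\<bar>gz i\<bar> \<le> 1" unfolding gz_def by (rule gbound)

lemma gz_pow2: "gz (2^m * a) = gz a"
  by (induction m) (auto simp: mult.assoc gz_ev)

definition D :: "int \<Rightarrow> nat \<Rightarrow> int \<Rightarrow> real" where
  "D a m b = gz (2^m*a + b) - gz a * gz b"

lemma D_ev: "D a (Suc m) (2*c) = D a m c"
proof -
  have "2^Suc m * a + 2*c = 2*(2^m*a + c)" by simp
  then show ?thesis unfolding D_def by (simp only: gz_ev)
qed

lemma D_od: "D a (Suc m) (2*c+1) = -(D a m c + D a m (c+1))/2"
proof -
  have e: "2^Suc m * a + (2*c+1) = 2*(2^m*a + c) + 1" by simp
  have A: "gz (2^Suc m*a + (2*c+1)) = -(gz (2^m*a+c) + gz (2^m*a+(c+1)))/2"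
  proof -
    have "gz (2*(2^m*a + c) + 1) = -(gz (2^m*a+c) + gz (2^m*a+c+1))/2" by (rule gz_od)
    then show ?thesis by (simp only: e add.assoc)
  qed
  have B: "gz a * gz (2*c+1) = -(gz a * gz c + gz a * gz (c+1))/2"
  proof -
    have "gz a * gz (2*c+1) = gz a * (-(gz c + gz (c+1))/2)" by (simp only: gz_od)
    then show ?thesis by (simp add: field_simps)
  qed
  show ?thesis unfolding D_def A B by (simp add: field_simps)
qed

lemma D_bound: "\<bar>D a m b\<bar> \<le> 2"
proof -
  have "\<bar>gz a * gz b\<bar> \<le> 1" unfolding abs_mult using gz_bound[of a] gz_bound[of b]
    by (simp add: mult_le_one)
  moreover have "\<bar>gz (2^m*a+b) - gz a * gz b\<bar> \<le> \<bar>gz (2^m*a+b)\<bar> + \<bar>gz a * gz b\<bar>"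
    by (rule abs_triangle_ineq4)
  ultimately show ?thesis unfolding D_def using gz_bound[of "2^m*a+b"] by linarith
qed

lemma D_0: "D a m 0 = 0"
  unfolding D_def using gz_pow2[of m a] by (simp add: gz_def g0)

lemma D_small: "\<bar>b\<bar> \<le> 1 \<Longrightarrow> \<bar>D a m b\<bar> \<le> 2 * (1/2)^m"
proof (induction m arbitrary: b)
  case 0
  then show ?case using D_bound by simp
next
  case (Suc m)
  have "b = 0 \<or> b = 1 \<or> b = -1" using Suc.prems by auto
  moreover
  have "D a (Suc m) 1 = -(D a m 0 + D a m 1)/2" using D_od[of a m 0] by simp
  moreover
  have "D a (Suc m) (-1) = -(D a m (-1) + D a m 0)/2" using D_od[of a m "-1"] by simp
  moreover have "D a (Suc m) 0 = 0" by (rule D_0)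
  moreover have "\<bar>D a m 1\<bar> \<le> 2 * (1/2)^m" "\<bar>D a m (-1)\<bar> \<le> 2 * (1/2)^m"
    using Suc.IH[of 1] Suc.IH[of "-1"] by auto
  ultimately show ?case using D_0[of a m] by (auto simp: abs_le_iff)
qed

lemma D_decay: "\<bar>b\<bar> \<le> 2^t \<Longrightarrow> \<bar>D a (m+t) b\<bar> \<le> 2 * (1/2)^m"
proof (induction t arbitrary: b)
  case 0
  then show ?case using D_small by simp
next
  case (Suc t)
  define c where "c = b div 2"
  have c: "b = 2*c \<or> b = 2*c+1" unfolding c_def by presburger
  show ?case
  proof (cases "b = 2*c")
    case True
    then have "\<bar>c\<bar> \<le> 2^t" using Suc.prems by simp
    then show ?thesis using True Suc.IH[of c] D_ev[of a "m+t" c] by simp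
  next
    case False
    then have b: "b = 2*c+1" using c by simp
    then have "\<bar>c\<bar> \<le> 2^t" "\<bar>c+1\<bar> \<le> 2^t" using Suc.prems by auto
    then show ?thesis using b Suc.IH[of c] Suc.IH[of "c+1"] D_od[of a "m+t" c] by simp
  qed
qed

end



fun Cs :: "nat \<Rightarrow> nat \<Rightarrow> nat \<Rightarrow> nat" where
  "Cs K c 0 = 0"
| "Cs K c (Suc j) = 2^(2*K) * Cs K c j + c*(2^K+1)"

context gseq begin

definition V :: "nat \<Rightarrow> real" where "V n = max \<bar>g n\<bar> \<bar>g (n+1)\<bar>"

lemma avg_le:
  fixes a b M :: real
  assumes "\<bar>a\<bar> \<le> M" "\<bar>b\<bar> \<le> M"
  shows "\<bar>-(a+b)/2\<bar> \<le> M"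
proof -
  have "\<bar>a+b\<bar> \<le> 2*M" using assms abs_triangle_ineq[of a b] by linarith
  then show ?thesis by (simp add: abs_minus_cancel)
qed

lemma V_nonneg: "0 \<le> V n" unfolding V_def by simp

lemma V_step0: "V (2*n) \<le> V n"
proof -
  have "g (2*n+1) = -(g n + g (n+1))/2" by (rule god)
  then have "\<bar>g (2*n+1)\<bar> \<le> V n" unfolding V_def using avg_le[of "g n" "V n" "g (n+1)"]
    unfolding V_def by simp
  then show ?thesis unfolding V_def[of "2*n"] using gev[of n] by (simp add: V_def)
qed

lemma V_step1: "V (2*n+1) \<le> V n"
proof -
  have "g (2*n+1) = -(g n + g (n+1))/2" by (rule god)
  moreover have "g (2*n+1+1) = g (n+1)" using gev[of "n+1"] by simp
  ultimately have "\<bar>g (2*n+1)\<bar> \<le> V n" "\<bar>g (2*n+1+1)\<bar> \<le> V n"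
    using avg_le[of "g n" "V n" "g (n+1)"] unfolding V_def by auto
  then show ?thesis unfolding V_def[of "2*n+1"] by simp
qed

lemma V_mono: "x < 2^j \<Longrightarrow> V (2^j*n + x) \<le> V n"
proof (induction j arbitrary: x)
  case 0
  then show ?case by simp
next
  case (Suc j)
  have x2: "x div 2 < 2^j" using Suc.prems by simp
  have e: "2^Suc j*n + x = 2*(2^j*n + x div 2) + x mod 2" by simp
  have "V (2*(2^j*n + x div 2) + x mod 2) \<le> V (2^j*n + x div 2)"
  proof (cases "x mod 2 = 0")
    case True then show ?thesis using V_step0[of "2^j*n + x div 2"] by simp
  next
    case False then have "x mod 2 = 1" by simp
    then show ?thesis using V_step1[of "2^j*n + x div 2"] by simp
  qed
  then show ?case unfolding e using Suc.IH[OF x2] by linarith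
qed

lemma gZ: "g (2^k*m + 1) = -g m/3 + (-1/2)^k * (g (m+1) + g m/3)"
proof (induction k)
  case 0 then show ?case by simp
next
  case (Suc k)
  have "g (2*(2^k*m) + 1) = -(g (2^k*m) + g (2^k*m+1))/2" by (rule god)
  then have "g (2^Suc k*m + 1) = -(g m + g (2^k*m+1))/2" using gpow2[of k m] by (simp add: mult.assoc)
  then show ?case using Suc.IH by (simp add: field_simps)
qed

lemma gO: "g (2^k*(m+1) - 1) = -g (m+1)/3 + (-1/2)^k * (g m + g (m+1)/3)"
proof (induction k)
  case 0 then show ?case by simp
next
  case (Suc k)
  have "0 < 2^k*(m+1::nat)" by simp
  then have pos: "2^k*(m+1) \<ge> (1::nat)" by linarith
  have e: "2^Suc k*(m+1) - 1 = 2*(2^k*(m+1) - 1) + 1" using pos by (simp add: algebra_simps)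
  have e2: "2^k*(m+1) - 1 + 1 = 2^k*(m+1)" using pos by simp
  have "g (2*(2^k*(m+1) - 1) + 1) = -(g (2^k*(m+1) - 1) + g (2^k*(m+1) - 1 + 1))/2" by (rule god)
  then have "g (2^Suc k*(m+1) - 1) = -(g (2^k*(m+1) - 1) + g (m+1))/2"
    unfolding e e2 gpow2 .
  then show ?case using Suc.IH by (simp add: field_simps)
qed

lemma real_aux:
  fixes x y t W :: real
  assumes "\<bar>x\<bar> \<le> W" "\<bar>y\<bar> \<le> W" "-1/2 \<le> t" "t \<le> 1/4"
  shows "abs (x*(1-t)/6 + y*(1+5*t)/6) \<le> W/2"
    and "abs (x*(-2-t)/6 + y*(-2+5*t)/6) \<le> W"
proof -
  have W0: "0 \<le> W" using assms(1) by linarith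
  have a1: "\<bar>x*(1-t)\<bar> \<le> W*(1-t)" unfolding abs_mult using assms
    by (intro mult_mono) auto
  have a2: "\<bar>y*(1+5*t)\<bar> \<le> W*\<bar>1+5*t\<bar>" unfolding abs_mult using assms
    by (intro mult_right_mono) auto
  have a3: "\<bar>x*(-2-t)\<bar> \<le> W*(2+t)" unfolding abs_mult using assms
    by (intro mult_mono) auto
  have a4: "\<bar>y*(-2+5*t)\<bar> \<le> W*\<bar>-2+5*t\<bar>" unfolding abs_mult using assms
    by (intro mult_right_mono) auto
  have c1: "W*(1-t) + W*\<bar>1+5*t\<bar> \<le> 3*W"
  proof -
    have "(1-t) + \<bar>1+5*t\<bar> \<le> 3" using assms by (auto simp: abs_if)
    then have "W*((1-t) + \<bar>1+5*t\<bar>) \<le> W*3" using W0 by (intro mult_left_mono) auto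
    then show ?thesis by (simp add: algebra_simps)
  qed
  have c2: "W*(2+t) + W*\<bar>-2+5*t\<bar> \<le> 6*W"
  proof -
    have "(2+t) + \<bar>-2+5*t\<bar> \<le> 6" using assms by (auto simp: abs_if)
    then have "W*((2+t) + \<bar>-2+5*t\<bar>) \<le> W*6" using W0 by (intro mult_left_mono) auto
    then show ?thesis by (simp add: algebra_simps)
  qed
  have "\<bar>x*(1-t) + y*(1+5*t)\<bar> \<le> 3*W"
    using abs_triangle_ineq[of "x*(1-t)" "y*(1+5*t)"] a1 a2 c1 by linarith
  then show "abs (x*(1-t)/6 + y*(1+5*t)/6) \<le> W/2" by (simp add: add_divide_distrib[symmetric])
  have "\<bar>x*(-2-t) + y*(-2+5*t)\<bar> \<le> 6*W"
    using abs_triangle_ineq[of "x*(-2-t)" "y*(-2+5*t)"] a3 a4 c2 by linarith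
  then show "abs (x*(-2-t)/6 + y*(-2+5*t)/6) \<le> W" by (simp add: add_divide_distrib[symmetric])
qed

lemma s_bounds: "k \<ge> 1 \<Longrightarrow> -1/2 \<le> (-1/2::real)^k \<and> (-1/2::real)^k \<le> 1/4"
proof (induction k rule: dec_induct)
  case base then show ?case by simp
next
  case (step k)
  then show ?case by auto
qed

lemma P1pat:
  assumes "k \<ge> 1"
  shows "V (2^(k+2)*n + 2^(k+1) + 1) \<le> V n / 2"
proof -
  define x where "x = g n"
  define y where "y = g (n+1)"
  define t :: real where "t = (-1/2)^k"
  define m where "m = 2*n+1"
  have xb: "\<bar>x\<bar> \<le> V n" "\<bar>y\<bar> \<le> V n" unfolding x_def y_def V_def by auto
  have gm: "g m = -(x+y)/2" unfolding m_def x_def y_def by (rule god)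
  have gm1: "g (m+1) = y" unfolding m_def y_def using gev[of "n+1"] by simp
  define Z where "Z = g (2^k*m + 1)"
  have Zf: "Z = x*(1-t)/6 + y*(1+5*t)/6"
    unfolding Z_def gZ gm gm1 t_def by (simp add: field_simps)
  have e: "2^(k+2)*n + 2^(k+1) + 1 = 2*(2^k*m) + 1" unfolding m_def by (simp add: algebra_simps)
  have gN: "g (2*(2^k*m) + 1) = -(g m + Z)/2" unfolding Z_def using god[of "2^k*m"] gpow2 by simp
  have gN1: "g (2*(2^k*m) + 1 + 1) = Z" unfolding Z_def using gev[of "2^k*m+1"] by simp
  have sb: "-1/2 \<le> t" "t \<le> 1/4" using s_bounds[OF assms] unfolding t_def by auto
  have "-(g m + Z)/2 = -(x*(-2-t)/6 + y*(-2+5*t)/6)/2" unfolding gm Zf by (simp add: field_simps)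
  then have "\<bar>g (2*(2^k*m) + 1)\<bar> \<le> V n / 2" using real_aux(2)[OF xb sb] gN by simp
  moreover have "\<bar>g (2*(2^k*m) + 1 + 1)\<bar> \<le> V n / 2" using real_aux(1)[OF xb sb] gN1 Zf by simp
  ultimately show ?thesis unfolding e V_def[of "2*(2^k*m)+1"] by simp
qed

lemma P2pat:
  assumes "k \<ge> 1"
  shows "V (2^(k+2)*n + 2^(k+1) - 2) \<le> V n / 2"
proof -
  define x where "x = g n"
  define y where "y = g (n+1)"
  define t :: real where "t = (-1/2)^k"
  define u where "u = g (2*n+1)"
  have xb: "\<bar>y\<bar> \<le> V n" "\<bar>x\<bar> \<le> V n" unfolding x_def y_def V_def by auto
  have gu: "u = -(x+y)/2" unfolding u_def x_def y_def by (rule god)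
  have g2n: "g (2*n) = x" unfolding x_def by (rule gev)
  define W where "W = g (2^k*(2*n+1) - 1)"
  have Wf: "W = y*(1-t)/6 + x*(1+5*t)/6"
  proof -
    have "W = -g (2*n+1)/3 + t * (g (2*n) + g (2*n+1)/3)" unfolding W_def t_def
      using gO[of k "2*n"] by simp
    then show ?thesis unfolding g2n u_def[symmetric] gu by (simp add: field_simps)
  qed
  have "0 < 2^k*(2*n+1::nat)" by simp
  then have pos: "2^k*(2*n+1) \<ge> (1::nat)" by linarith
  have e: "2^(k+2)*n + 2^(k+1) - 2 = 2*(2^k*(2*n+1) - 1)" using pos by (simp add: algebra_simps)
  have e2: "2^k*(2*n+1) - 1 + 1 = 2^k*(2*n+1)" using pos by simp
  have gN: "g (2*(2^k*(2*n+1) - 1)) = W" unfolding W_def by (rule gev)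
  have gN1: "g (2*(2^k*(2*n+1) - 1) + 1) = -(W + u)/2"
    using god[of "2^k*(2*n+1) - 1"] unfolding e2 gpow2 W_def u_def by simp
  have sb: "-1/2 \<le> t" "t \<le> 1/4" using s_bounds[OF assms] unfolding t_def by auto
  have "-(W + u)/2 = -(y*(-2-t)/6 + x*(-2+5*t)/6)/2" unfolding gu Wf by (simp add: field_simps)
  then have "\<bar>g (2*(2^k*(2*n+1) - 1) + 1)\<bar> \<le> V n / 2" using real_aux(2)[OF xb sb] gN1 by simp
  moreover have "\<bar>g (2*(2^k*(2*n+1) - 1))\<bar> \<le> V n / 2" using real_aux(1)[OF xb sb] gN Wf by simp
  ultimately show ?thesis unfolding e V_def[of "2*(2^k*(2*n+1) - 1)"] by simp
qed


lemma Hpat: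
  "w < 2^L \<Longrightarrow> (k \<ge> 1 \<or> w + 1 < 2^L) \<Longrightarrow>
   V (2^(L+k+2)*n + 2^(L+k+1) + 2^(k+1)*w + 1) \<le> V n / 2"
proof (induction L arbitrary: k w n)
  case 0
  then have "w = 0" "k \<ge> 1" by auto
  then show ?case using P1pat[of k n] by simp
next
  case (Suc L)
  define w' where "w' = w div 2"
  have w'b: "w' < 2^L" using Suc.prems(1) unfolding w'_def by simp
  show ?case
  proof (cases "even w")
    case True
    then have w: "w = 2*w'" unfolding w'_def by simp
    have "V (2^(L+(k+1)+2)*n + 2^(L+(k+1)+1) + 2^((k+1)+1)*w' + 1) \<le> V n / 2"
      using Suc.IH[of w' "k+1" n] w'b by simp
    moreover have "2^(L+(k+1)+2)*n + 2^(L+(k+1)+1) + 2^((k+1)+1)*w' + 1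
       = 2^(Suc L+k+2)*n + 2^(Suc L+k+1) + 2^(k+1)*w + (1::nat)"
      unfolding w by (simp add: power_add power_Suc algebra_simps)
    ultimately show ?thesis by (simp only:)
  next
    case False
    then have w: "w = 2*w'+1" unfolding w'_def by simp
    show ?thesis
    proof (cases "k \<ge> 1")
      case True
      have eq: "2^(Suc L+k+2)*n + 2^(Suc L+k+1) + 2^(k+1)*w + 1
         = 2^(k+2)*(2^(Suc L)*n + (2^L + w')) + 2^(k+1) + (1::nat)"
        unfolding w by (simp add: power_add power_Suc algebra_simps)
      have "2^L + w' < 2^Suc L" using w'b by simp
      then have "V (2^(Suc L)*n + (2^L + w')) \<le> V n" by (rule V_mono)
      then show ?thesis unfolding eq using P1pat[OF True, of "2^(Suc L)*n + (2^L + w')"] by linarith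
    next
      case False
      then have k0: "k = 0" by simp
      have w'1: "w' + 1 < 2^L" using Suc.prems(2) k0 w by simp
      have eq: "2^(Suc L+k+2)*n + 2^(Suc L+k+1) + 2^(k+1)*w + 1
         = 2*(2^(L+0+2)*n + 2^(L+0+1) + 2^(0+1)*w' + 1) + (1::nat)"
        unfolding w k0 by (simp add: power_add power_Suc algebra_simps)
      have "V (2^(L+0+2)*n + 2^(L+0+1) + 2^(0+1)*w' + 1) \<le> V n / 2"
        using Suc.IH[of w' 0 n] w'b w'1 by simp
      then show ?thesis unfolding eq using V_step1[of "2^(L+0+2)*n + 2^(L+0+1) + 2^(0+1)*w' + 1"] by linarith
    qed
  qed
qed

lemma Hpat':
  "w < 2^L \<Longrightarrow> (k \<ge> 1 \<or> w > 0) \<Longrightarrow>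
   V (2^(L+k+2)*n + 2^(k+1)*w + 2^(k+1) - 2) \<le> V n / 2"
proof (induction L arbitrary: k w n)
  case 0
  then have "w = 0" "k \<ge> 1" by auto
  then show ?case using P2pat[of k n] by simp
next
  case (Suc L)
  define w' where "w' = w div 2"
  have w'b: "w' < 2^L" using Suc.prems(1) unfolding w'_def by simp
  have p2: "(2::nat) \<le> 2^(k+1)" by simp
  show ?case
  proof (cases "even w")
    case False
    then have w: "w = 2*w'+1" unfolding w'_def by simp
    have "V (2^(L+(k+1)+2)*n + 2^((k+1)+1)*w' + 2^((k+1)+1) - 2) \<le> V n / 2"
      using Suc.IH[of w' "k+1" n] w'b by simp
    moreover have "2^(L+(k+1)+2)*n + 2^((k+1)+1)*w' + 2^((k+1)+1) - 2
       = 2^(Suc L+k+2)*n + 2^(k+1)*w + 2^(k+1) - (2::nat)"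
      unfolding w using p2 by (simp add: power_add power_Suc algebra_simps)
    ultimately show ?thesis by (simp only:)
  next
    case True
    then have w: "w = 2*w'" unfolding w'_def by simp
    show ?thesis
    proof (cases "k \<ge> 1")
      case True
      have eq: "2^(Suc L+k+2)*n + 2^(k+1)*w + 2^(k+1) - 2
         = 2^(k+2)*(2^(Suc L)*n + w') + 2^(k+1) - (2::nat)"
        unfolding w using p2 by (simp add: power_add power_Suc algebra_simps)
      have "w' < 2^Suc L" using w'b by simp
      then have "V (2^(Suc L)*n + w') \<le> V n" by (rule V_mono)
      then show ?thesis unfolding eq using P2pat[OF True, of "2^(Suc L)*n + w'"] by linarith
    next
      case False
      then have k0: "k = 0" by simp
      have w'1: "w' > 0" using Suc.prems(2) k0 w by simp
      have eq: "2^(Suc L+k+2)*n + 2^(k+1)*w + 2^(k+1) - 2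
         = 2*(2^(L+0+2)*n + 2^(0+1)*w' + 2^(0+1) - 2)"
        unfolding w k0 by (simp add: power_add power_Suc algebra_simps)
      have "V (2^(L+0+2)*n + 2^(0+1)*w' + 2^(0+1) - 2) \<le> V n / 2"
        using Suc.IH[of w' 0 n] w'b w'1 by simp
      then show ?thesis unfolding eq using V_step0[of "2^(L+0+2)*n + 2^(0+1)*w' + 2^(0+1) - 2"] by linarith
    qed
  qed
qed

lemma block:
  assumes K: "K \<ge> 1" and c0: "0 < c" and c1: "c + 1 < 2^K"
  shows "V (2^(2*K)*n + c*(2^K+1)) \<le> V n / 2"
proof -
  obtain L where L: "K = L + 1" using K by (metis add.commute le_Suc_ex)
  define w where "w = c div 2"
  define n' where "n' = 2^L*n + w"
  have wb: "w < 2^L" using c1 unfolding w_def L by simp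
  have Vn': "V n' \<le> V n" unfolding n'_def using wb by (rule V_mono)
  have sq: "(2::nat)^(2*K) = 2^K * 2^K" by (simp add: power_add mult_2)
  show ?thesis
  proof (cases "even c")
    case False
    then have c: "c = 2*w+1" unfolding w_def by simp
    have w1: "w + 1 < 2^L" using c1 unfolding c L by simp
    have eq: "2^(2*K)*n + c*(2^K+1) = 2^(L+0+2)*n' + 2^(L+0+1) + 2^(0+1)*w + 1"
      unfolding sq unfolding c L n'_def by (simp add: power_add power_Suc algebra_simps)
    show ?thesis unfolding eq using Hpat[of w L 0 n'] wb w1 Vn' by simp
  next
    case True
    then have c: "c = 2*w" unfolding w_def by simp
    have w1: "w > 0" using c0 unfolding c by simp
    have eq: "2^(2*K)*n + c*(2^K+1) = 2^(L+0+2)*n' + 2^(0+1)*w + 2^(0+1) - 2"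
      unfolding sq unfolding c L n'_def by (simp add: power_add power_Suc algebra_simps)
    show ?thesis unfolding eq using Hpat'[of w L 0 n'] wb w1 Vn' by simp
  qed
qed

lemma g_ones: "g (2^L - 1) = 1/9 + 8/9 * (-1/2)^L"
proof (induction L)
  case 0 then show ?case using g0 by simp
next
  case (Suc L)
  have pos: "(1::nat) \<le> 2^L" by simp
  have e: "(2::nat)^Suc L - 1 = 2*(2^L - 1) + 1" using pos by (simp only: power_Suc)
  have e2: "(2::nat)^L - 1 + 1 = 2^L" using pos by simp
  have "g (2*(2^L - 1) + 1) = -(g (2^L - 1) + g (2^L - 1 + 1))/2" by (rule god)
  moreover have "g (2^L) = -1/3" using gpow2[of L 1] g1 by simp
  ultimately have "g (2^Suc L - 1) = -(g (2^L - 1) - 1/3)/2" unfolding e e2 by simp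
  then show ?case using Suc.IH by (simp add: field_simps)
qed

lemma V0: "V 0 = 1" unfolding V_def using g0 g1 by simp

lemma Cs_V:
  assumes "K \<ge> 1" "0 < c" "c + 1 < 2^K"
  shows "V (Cs K c j) \<le> (1/2)^j"
proof (induction j)
  case 0 then show ?case using V0 by simp
next
  case (Suc j)
  then show ?case using block[OF assms, of "Cs K c j"] by simp
qed

lemma Cs_int:
  assumes hc: "int p * int c = int q * (2^K - 1)"
  shows "int p * int (Cs K c j) + int q = int q * 2^(2*K*j)"
proof (induction j)
  case 0 then show ?case by simp
next
  case (Suc j)
  have "int p * int (Cs K c (Suc j)) + int q
     = 2^(2*K) * (int p * int (Cs K c j)) + (int p * int c) * (2^K+1) + int q"
    by (simp add: algebra_simps)
  also have "\<dots> = 2^(2*K) * (int q * 2^(2*K*j) - int q) + (int q * 2^K - int q) * (2^K+1) + int q"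
  proof -
    have A: "int p * int (Cs K c j) = int q * 2^(2*K*j) - int q" using Suc.IH by linarith
    have B: "int p * int c = int q * 2^K - int q" using hc by (simp add: algebra_simps)
    show ?thesis by (simp only: A B)
  qed
  also have "\<dots> = int q * 2^(2*K*Suc j)"
    by (simp add: algebra_simps power_add mult_Suc_right mult_2_right)
  finally show ?case .
qed

lemma sep_lt:
  assumes p: "odd p" and q: "odd q" and qp: "q < p"
  shows "\<exists>r\<ge>1. g (p*r) \<noteq> g (q*r)"
proof -
  define K where "K = totient p"
  have p0: "p > 0" using p by (cases p) auto
  have q0: "q > 0" using q by (cases q) auto
  have K1: "K \<ge> 1" unfolding K_def using p0 totient_gt_0_iff[of p] by linarith
  have cg: "[2^K = 1] (mod p)" unfolding K_def by (rule euler_theorem) (simp add: p)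
  define X :: nat where "X = 2^K"
  have X2: "X \<ge> 2" unfolding X_def using K1
    by (metis One_nat_def power_increasing power_one_right pos2 Suc_1 Suc_leI)
  have "p dvd X - 1" unfolding X_def by (rule cong_to_1_nat[OF cg])
  then obtain c0 where c0: "X - 1 = p*c0" by blast
  define c where "c = q*c0"
  have hcn: "p*c = q*(X-1)" unfolding c_def c0 by simp
  have hc: "int p * int c = int q * (2^K - 1)"
  proof -
    have "int (p*c) = int (q*(X-1))" using hcn by simp
    then show ?thesis using X2 unfolding X_def by (simp add: of_nat_diff)
  qed
  have c0pos: "c0 > 0" using c0 X2 by (cases c0) auto
  have cpos: "0 < c" unfolding c_def using q0 c0pos by simp
  have "p*c < p*(X-1)" unfolding hcn using qp X2 by simp
  then have "c < X - 1" by simp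
  then have cX: "c + 1 < 2^K" using X2 unfolding X_def by linarith
  have cg8: "[X^8 = 1^8] (mod p)" unfolding X_def by (rule cong_pow[OF cg])
  have "p dvd X^8 - 1" using cong_to_1_nat cg8 by simp
  then obtain r where r: "X^8 - 1 = p*r" by blast
  have X8: "X^8 \<ge> 1" using X2 by simp
  have r1: "r \<ge> 1"
  proof (rule ccontr)
    assume "\<not> r \<ge> 1"
    then have "r = 0" by simp
    then have "X^8 = 1" using r X8 by simp
    moreover have "(2::nat)^8 \<le> X^8" using X2 by (rule power_mono) simp
    ultimately show False by simp
  qed
  have ri: "int p * int r = 2^(8*K) - 1"
  proof -
    have "int (p*r) = int (X^8 - 1)" using r by simp
    then show ?thesis using X8 unfolding X_def by (simp add: of_nat_diff power_mult[symmetric] mult.commute)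
  qed
  have C4: "int p * int (Cs K c 4) + int q = int q * 2^(8*K)"
    using Cs_int[OF hc, of 4] by (simp add: mult.commute)
  have "int p * (int q * int r) = int q * (int p * int r)" by (simp add: algebra_simps)
  also have "\<dots> = int q * (2^(8*K) - 1)" using ri by simp
  also have "\<dots> = int p * int (Cs K c 4)" using C4 by (simp add: algebra_simps)
  finally have "int p * int (q*r) = int p * int (Cs K c 4)" by simp
  then have "int (q*r) = int (Cs K c 4)" using p0 by simp
  then have qr: "q*r = Cs K c 4" by (simp only: of_nat_eq_iff)
  have pr: "p*r = 2^(8*K) - 1" using r unfolding X_def by (simp add: power_mult[symmetric] mult.commute)
  have gpr: "g (p*r) > 1/9"
  proof -
    have "(-1/2::real)^(8*K) > 0" by (simp add: zero_less_power_eq)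
    then show ?thesis unfolding pr g_ones by simp
  qed
  have "\<bar>g (q*r)\<bar> \<le> 1/16"
    using Cs_V[OF K1 cpos cX, of 4] unfolding qr V_def by (simp add: power_divide)
  then have "g (p*r) \<noteq> g (q*r)" using gpr by auto
  then show ?thesis using r1 by blast
qed

lemma sep:
  assumes "odd p" "odd q" "p \<noteq> q"
  shows "\<exists>r\<ge>1. g (p*r) \<noteq> g (q*r)"
proof (cases "q < p")
  case True then show ?thesis using sep_lt assms by blast
next
  case False then have "p < q" using assms by simp
  then show ?thesis using sep_lt[of q p] assms by metis
qed

end



definition nd :: "nat \<Rightarrow> nat \<Rightarrow> nat" where "nd j k = (if k \<le> j then j - k else k - j)"

lemma geo_G: "(\<Sum>k<N. (1/2::real)^(N-k)) \<le> 1"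
proof (induction N)
  case 0 then show ?case by simp
next
  case (Suc N)
  have "(\<Sum>k<Suc N. (1/2::real)^(Suc N-k)) = (\<Sum>k<Suc N. (1/2) * (1/2::real)^(N-k))"
    by (intro sum.cong refl) (simp add: Suc_diff_le)
  also have "\<dots> = (1/2) * (\<Sum>k<Suc N. (1/2::real)^(N-k))" by (simp only: sum_distrib_left)
  also have "\<dots> = (1/2) * ((\<Sum>k<N. (1/2::real)^(N-k)) + 1)" by simp
  also have "\<dots> \<le> 1" using Suc.IH by simp
  finally show ?case .
qed

lemma geo_F: "(\<Sum>j<N. \<Sum>k<N. (1/2::real)^(nd j k)) \<le> 3 * N"
proof (induction N)
  case 0 then show ?case by simp
next
  case (Suc N)
  have a: "(\<Sum>j<N. (1/2::real)^(nd j N)) = (\<Sum>k<N. (1/2::real)^(N-k))"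
    by (intro sum.cong refl) (simp add: nd_def)
  have b: "(\<Sum>k<N. (1/2::real)^(nd N k)) = (\<Sum>k<N. (1/2::real)^(N-k))"
    by (intro sum.cong refl) (simp add: nd_def)
  have "(\<Sum>j<Suc N. \<Sum>k<Suc N. (1/2::real)^(nd j k))
      = (\<Sum>j<N. \<Sum>k<N. (1/2::real)^(nd j k)) + (\<Sum>j<N. (1/2::real)^(nd j N))
        + (\<Sum>k<N. (1/2::real)^(nd N k)) + 1"
    by (simp add: sum.distrib nd_def)
  also have "\<dots> \<le> 3 * N + 1 + 1 + 1" unfolding a b using Suc.IH geo_G[of N] by linarith
  finally show ?case by simp
qed

context gseq begin

lemma term_bound: "\<bar>g (nd (u*2^j) (u*2^k)) - (g u)^2\<bar> \<le> 2^(u+1) * (1/2)^(nd j k)"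
proof -
  have key: "\<bar>g (u*(2^d - 1)) - (g u)^2\<bar> \<le> 2^(u+1) * (1/2)^d" for d
  proof -
    have eq: "g (u*(2^d - 1)) - (g u)^2 = D (int u) d (- int u)"
    proof -
      have "nat \<bar>2^d * int u + - int u\<bar> = u*(2^d - 1)"
      proof -
        have "(1::int) \<le> 2^d" by simp
        then have "2^d * int u + - int u = int (u*(2^d - 1))"
          by (simp add: of_nat_diff algebra_simps)
        then show ?thesis by (simp only:)
      qed
      then show ?thesis unfolding D_def gz_def by (simp add: power2_eq_square)
    qed
    have sb: "\<bar>- int u\<bar> \<le> 2^u"
    proof -
      have "u < 2^u" by (rule less_exp)
      then have "int u \<le> int (2^u)" by linarith
      then have "int u \<le> 2^u" by simp
      then show ?thesis by simp
    qed
    show ?thesis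
    proof (cases "u \<le> d")
      case True
      then obtain e where e: "d = e + u" by (metis add.commute le_add_diff_inverse)
      have "\<bar>D (int u) (e+u) (- int u)\<bar> \<le> 2 * (1/2)^e" by (rule D_decay[OF sb])
      moreover have "(2::real) * (1/2)^e = 2^(u+1) * (1/2)^d"
        unfolding e by (simp add: power_add power_divide field_simps)
      ultimately have "\<bar>D (int u) d (- int u)\<bar> \<le> 2^(u+1) * (1/2)^d" using e by simp
      then show ?thesis by (simp only: eq)
    next
      case False
      have "(2::real) \<le> 2^(u+1) * (1/2)^d"
      proof -
        have "(2::real)^(d+1) \<le> 2^(u+1)" using False by (intro power_increasing) auto
        then show ?thesis by (simp add: power_divide field_simps power_add)
      qed
      then show ?thesis unfolding eq using D_bound[of "int u" d "- int u"] by linarith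
    qed
  qed
  show ?thesis
  proof (cases "k \<le> j")
    case True
    then obtain d where d: "j = k + d" by (metis le_add_diff_inverse)
    have "nd (u*2^j) (u*2^k) = 2^k * (u*(2^d - 1))"
      unfolding d nd_def by (simp add: power_add algebra_simps diff_mult_distrib2)
    then have "g (nd (u*2^j) (u*2^k)) = g (u*(2^d - 1))" by (simp add: gpow2)
    moreover have "nd j k = d" unfolding nd_def d by simp
    ultimately show ?thesis using key[of d] by simp
  next
    case False
    then obtain d where d: "k = j + d" by (metis le_add_diff_inverse nat_le_linear)
    have "nd (u*2^j) (u*2^k) = 2^j * (u*(2^d - 1))"
    proof -
      have "u*2^j \<le> u*2^(j+d)" by (simp add: power_add)
      then show ?thesis
        unfolding d nd_def using False d by (simp add: power_add algebra_simps diff_mult_distrib2)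
    qed
    then have "g (nd (u*2^j) (u*2^k)) = g (u*(2^d - 1))" by (simp add: gpow2)
    moreover have "nd j k = d" unfolding nd_def d using False d by simp
    ultimately show ?thesis using key[of d] by simp
  qed
qed

end

locale tmsig = gseq g for g +
  fixes \<sigma> :: "complex measure"
  assumes sS: "sets \<sigma> = sets borel"
    and ps: "prob_space \<sigma>"
    and AEc: "AE z in \<sigma>. cmod z = 1"
    and Iz: "\<And>k. (\<integral>z. z^k \<partial>\<sigma>) = complex_of_real (g k)"
    and Ic: "\<And>k. (\<integral>z. cnj z ^ k \<partial>\<sigma>) = complex_of_real (g k)"
begin

lemma meas: assumes "f \<in> borel_measurable borel" shows "f \<in> borel_measurable \<sigma>"
  using assms measurable_cong_sets[OF sS refl, of borel] by blast

lemma cmeas: "continuous_on UNIV f \<Longrightarrow> f \<in> borel_measurable \<sigma>"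
  by (intro meas borel_measurable_continuous_onI)

lemma intgB:
  fixes f :: "complex \<Rightarrow> 'b::{banach,second_countable_topology}"
  assumes "continuous_on UNIV f" "\<And>z. cmod z = 1 \<Longrightarrow> norm (f z) \<le> B"
  shows "integrable \<sigma> f"
proof -
  interpret P: prob_space \<sigma> by (rule ps)
  have "AE z in \<sigma>. norm (f z) \<le> B" using AEc by eventually_elim (use assms in auto)
  then show ?thesis by (rule P.integrable_const_bound) (rule cmeas[OF assms(1)])
qed

lemma intg_zc: "integrable \<sigma> (\<lambda>z. z^m * cnj z ^ n)"
  by (rule intgB[where B=1]) (auto intro!: continuous_intros simp: norm_mult norm_power)

lemma intg_z: "integrable \<sigma> (\<lambda>z. z^m)"
  by (rule intgB[where B=1]) (auto intro!: continuous_intros simp: norm_power)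

lemma intg_c: "integrable \<sigma> (\<lambda>z. cnj z ^ n)"
  by (rule intgB[where B=1]) (auto intro!: continuous_intros simp: norm_power)

lemma I_zc: "(\<integral>z. z^m * cnj z ^ n \<partial>\<sigma>) = complex_of_real (g (nd m n))"
proof -
  have ae: "AE z in \<sigma>. z^m * cnj z ^ n = (if n \<le> m then z^(m-n) else cnj z ^ (n-m))"
    using AEc
  proof eventually_elim
    case (elim z)
    have zz: "z * cnj z = 1" using complex_norm_square[of z] elim by simp
    show ?case
    proof (cases "n \<le> m")
      case True
      then obtain d where d: "m = n + d" by (metis le_add_diff_inverse)
      have "z^m * cnj z ^ n = z^d * (z * cnj z)^n" unfolding d
        by (simp add: power_add power_mult_distrib mult_ac)
      then show ?thesis using zz d by simp
    next
      case False
      then obtain d where d: "n = m + d" by (metis le_add_diff_inverse nat_le_linear)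
      have "z^m * cnj z ^ n = cnj z^d * (z * cnj z)^m" unfolding d
        by (simp add: power_add power_mult_distrib mult_ac)
      then show ?thesis using zz d False by simp
    qed
  qed
  have "(\<integral>z. z^m * cnj z ^ n \<partial>\<sigma>) = (\<integral>z. (if n \<le> m then z^(m-n) else cnj z ^ (n-m)) \<partial>\<sigma>)"
    by (rule integral_cong_AE[OF _ _ ae]) (cases "n \<le> m"; auto intro!: cmeas continuous_intros)+
  also have "\<dots> = complex_of_real (g (nd m n))"
    by (cases "n \<le> m") (simp_all add: Iz Ic nd_def)
  finally show ?thesis .
qed

lemma I_pair:
  "(\<integral>z. (z^m - complex_of_real a) * (cnj z ^ n - complex_of_real a) \<partial>\<sigma>)
     = complex_of_real (g (nd m n) - a * g m - a * g n + a^2)"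
proof -
  interpret P: prob_space \<sigma> by (rule ps)
  have e: "(\<lambda>z. (z^m - complex_of_real a) * (cnj z ^ n - complex_of_real a))
     = (\<lambda>z. z^m * cnj z ^ n - complex_of_real a * z^m - complex_of_real a * cnj z ^ n + complex_of_real (a^2))"
    by (auto simp: algebra_simps power2_eq_square)
  show ?thesis unfolding e
    using intg_zc[of m n] intg_z[of m] intg_c[of n]
    by (simp add: I_zc Iz Ic P.prob_space)
qed

end



lemma sq_le_iff: "0 \<le> (x::real) \<Longrightarrow> 0 < d \<Longrightarrow> (d \<le> x) = (d^2 \<le> x^2)"
  using abs_le_square_iff[of d x] by simp

lemma avg_norm: "cmod z = 1 \<Longrightarrow> cmod ((\<Sum>k<N. z^(f k)) / of_nat N) \<le> 1"
proof -
  assume z: "cmod z = 1"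
  have "cmod (\<Sum>k<N. z^(f k)) \<le> (\<Sum>k<N. cmod (z^(f k)))" by (rule norm_sum)
  also have "\<dots> = N" using z by (simp add: norm_power)
  finally have h: "cmod (\<Sum>k<N. z^(f k)) \<le> N" .
  show ?thesis
  proof (cases "N = 0")
    case True then show ?thesis by simp
  next
    case False
    then show ?thesis using h by (simp add: norm_divide divide_le_eq)
  qed
qed

context tmsig begin

lemma intg_pair: "integrable \<sigma> (\<lambda>z. (z^m - complex_of_real a) * (cnj z ^ n - complex_of_real a))"
proof -
  interpret P: prob_space \<sigma> by (rule ps)
  have e: "(\<lambda>z. (z^m - complex_of_real a) * (cnj z ^ n - complex_of_real a))
     = (\<lambda>z. z^m * cnj z ^ n - complex_of_real a * z^m - complex_of_real a * cnj z ^ n + complex_of_real (a^2))"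
    by (auto simp: algebra_simps power2_eq_square)
  show ?thesis unfolding e
    using intg_zc[of m n] intg_z[of m] intg_c[of n] by simp
qed

lemma intg_sq:
  "integrable \<sigma> (\<lambda>z. (cmod ((\<Sum>k<N. z^(f k)) / of_nat N - complex_of_real c))^2)"
proof (rule intgB[where B="(1 + \<bar>c\<bar>)^2"])
  show "continuous_on UNIV (\<lambda>z. (cmod ((\<Sum>k<N. z^(f k)) / of_nat N - complex_of_real c))^2)"
    by (cases "N = 0") (auto intro!: continuous_intros)
  fix z :: complex assume z: "cmod z = 1"
  have "cmod ((\<Sum>k<N. z^(f k)) / of_nat N - complex_of_real c) \<le> cmod ((\<Sum>k<N. z^(f k)) / of_nat N) + cmod (complex_of_real c)"
    by (rule norm_triangle_ineq4)
  also have "\<dots> \<le> 1 + \<bar>c\<bar>" using avg_norm[OF z, where N=N and f=f] by simp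
  finally have "cmod ((\<Sum>k<N. z^(f k)) / of_nat N - complex_of_real c) \<le> 1 + \<bar>c\<bar>" .
  then show "norm ((cmod ((\<Sum>k<N. z^(f k)) / of_nat N - complex_of_real c))^2) \<le> (1 + \<bar>c\<bar>)^2"
    by (simp add: power_mono)
qed

lemma L2:
  fixes u N :: nat
  assumes N: "N \<ge> 1"
  shows "(\<integral>z. (cmod ((\<Sum>k<N. z^(u*2^k)) / of_nat N - complex_of_real (g u)))^2 \<partial>\<sigma>) \<le> 3 * 2^(u+1) / N"
proof -
  interpret P: prob_space \<sigma> by (rule ps)
  define a where "a = g u"
  define h where "h j k z = (z^(u*2^j) - complex_of_real a) * (cnj z ^ (u*2^k) - complex_of_real a)" for j k z
  have F: "(\<Sum>k<N. z^(u*2^k)) / of_nat N - complex_of_real a = (\<Sum>k<N. (z^(u*2^k) - complex_of_real a)) / of_nat N" for z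
    using N by (simp add: sum_subtractf field_simps)
  have sq: "complex_of_real ((cmod ((\<Sum>k<N. z^(u*2^k)) / of_nat N - complex_of_real a))^2)
      = (\<Sum>j<N. \<Sum>k<N. h j k z) / (of_nat N)^2" for z
  proof -
    let ?X = "\<Sum>k<N. (z^(u*2^k) - complex_of_real a)"
    let ?Y = "\<Sum>k<N. (cnj z ^ (u*2^k) - complex_of_real a)"
    have "complex_of_real ((cmod (?X / of_nat N))^2) = (?X / of_nat N) * cnj (?X / of_nat N)"
      by (rule complex_norm_square)
    also have "cnj (?X / of_nat N) = ?Y / of_nat N" by simp
    also have "(?X / of_nat N) * (?Y / of_nat N) = (?X * ?Y) / (of_nat N)^2"
      by (simp add: power2_eq_square)
    also have "?X * ?Y = (\<Sum>j<N. \<Sum>k<N. h j k z)" unfolding h_def by (rule sum_product)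
    finally show ?thesis unfolding F .
  qed
  have gj: "g (u*2^j) = a" for j unfolding a_def using gpow2[of j u] by (simp add: mult.commute)
  have Ih: "(\<integral>z. h j k z \<partial>\<sigma>) = complex_of_real (g (nd (u*2^j) (u*2^k)) - a^2)" for j k
    unfolding h_def I_pair gj by (simp add: power2_eq_square)
  have intgh: "integrable \<sigma> (h j k)" for j k unfolding h_def by (rule intg_pair)
  have "complex_of_real (\<integral>z. (cmod ((\<Sum>k<N. z^(u*2^k)) / of_nat N - complex_of_real a))^2 \<partial>\<sigma>)
      = (\<integral>z. complex_of_real ((cmod ((\<Sum>k<N. z^(u*2^k)) / of_nat N - complex_of_real a))^2) \<partial>\<sigma>)"
    by (rule integral_complex_of_real[symmetric])
  also have "\<dots> = (\<integral>z. (\<Sum>j<N. \<Sum>k<N. h j k z) / (of_nat N)^2 \<partial>\<sigma>)" unfolding sq ..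
  also have "\<dots> = (\<integral>z. (\<Sum>j<N. \<Sum>k<N. h j k z) \<partial>\<sigma>) / (of_nat N)^2" by simp
  also have "(\<integral>z. (\<Sum>j<N. \<Sum>k<N. h j k z) \<partial>\<sigma>) = (\<Sum>j<N. \<integral>z. (\<Sum>k<N. h j k z) \<partial>\<sigma>)"
    by (rule Bochner_Integration.integral_sum) (intro Bochner_Integration.integrable_sum intgh)
  also have "\<dots> = (\<Sum>j<N. \<Sum>k<N. \<integral>z. h j k z \<partial>\<sigma>)"
    by (intro sum.cong refl Bochner_Integration.integral_sum intgh)
  also have "\<dots> = complex_of_real (\<Sum>j<N. \<Sum>k<N. (g (nd (u*2^j) (u*2^k)) - a^2))"
    unfolding Ih by simp
  finally have eqI: "(\<integral>z. (cmod ((\<Sum>k<N. z^(u*2^k)) / of_nat N - complex_of_real a))^2 \<partial>\<sigma>)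
      = (\<Sum>j<N. \<Sum>k<N. (g (nd (u*2^j) (u*2^k)) - a^2)) / (real N)^2"
  proof -
    assume h: "complex_of_real (\<integral>z. (cmod ((\<Sum>k<N. z^(u*2^k)) / of_nat N - complex_of_real a))^2 \<partial>\<sigma>) =
      complex_of_real (\<Sum>j<N. \<Sum>k<N. (g (nd (u*2^j) (u*2^k)) - a^2)) / (of_nat N)^2"
    have "complex_of_real (\<Sum>j<N. \<Sum>k<N. (g (nd (u*2^j) (u*2^k)) - a^2)) / (of_nat N)^2
       = complex_of_real ((\<Sum>j<N. \<Sum>k<N. (g (nd (u*2^j) (u*2^k)) - a^2)) / (real N)^2)" by simp
    then show ?thesis using h of_real_eq_iff by metis
  qed
  have "(\<Sum>j<N. \<Sum>k<N. (g (nd (u*2^j) (u*2^k)) - a^2)) \<le> (\<Sum>j<N. \<Sum>k<N. 2^(u+1) * (1/2::real)^(nd j k))"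
  proof (intro sum_mono)
    fix j k
    show "g (nd (u*2^j) (u*2^k)) - a^2 \<le> 2^(u+1) * (1/2::real)^(nd j k)"
      using term_bound[of u j k] unfolding a_def by (simp add: abs_le_iff)
  qed
  also have "\<dots> = 2^(u+1) * (\<Sum>j<N. \<Sum>k<N. (1/2::real)^(nd j k))" by (simp add: sum_distrib_left)
  also have "\<dots> \<le> (2::real)^(u+1) * (3 * real N)" using geo_F[of N] by (intro mult_left_mono) auto
  finally have bnd: "(\<Sum>j<N. \<Sum>k<N. (g (nd (u*2^j) (u*2^k)) - a^2)) \<le> (2::real)^(u+1) * (3 * real N)" .
  have Npos: "(0::real) < N" using N by simp
  have "(\<Sum>j<N. \<Sum>k<N. (g (nd (u*2^j) (u*2^k)) - a^2)) / (real N)^2 \<le> (2::real)^(u+1) * (3 * real N) / (real N)^2"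
    using bnd Npos by (intro divide_right_mono) auto
  also have "\<dots> = 3 * 2^(u+1) / N" using Npos by (simp add: power2_eq_square field_simps)
  finally have "(\<Sum>j<N. \<Sum>k<N. (g (nd (u*2^j) (u*2^k)) - a^2)) / (real N)^2 \<le> 3 * 2^(u+1) / N" .
  then show ?thesis using eqI unfolding a_def by linarith
qed

lemma bad_bound:
  fixes p r N :: nat and d :: real
  assumes N: "N \<ge> 1" and d: "d > 0"
  shows "measure (distr \<sigma> borel (\<lambda>z. z^p))
     {w. d \<le> cmod ((\<Sum>k<N. w^(r*2^k)) / of_nat N - complex_of_real (g (p*r)))}
     \<le> 3 * 2^(p*r+1) / (N * d^2)"
proof -
  interpret P: prob_space \<sigma> by (rule ps)
  have mp: "(\<lambda>z::complex. z^p) \<in> measurable \<sigma> borel" by (intro meas) measurable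
  define F where "F z = (\<Sum>k<N. z^((p*r)*2^k)) / of_nat N - complex_of_real (g (p*r))" for z
  have Fp: "(\<Sum>k<N. (z^p)^(r*2^k)) / of_nat N - complex_of_real (g (p*r)) = F z" for z
    unfolding F_def by (simp add: power_mult mult.assoc)
  have sm: "{w. d \<le> cmod ((\<Sum>k<N. w^(r*2^k)) / of_nat N - complex_of_real (g (p*r)))} \<in> sets borel"
    by measurable
  have "measure (distr \<sigma> borel (\<lambda>z. z^p)) {w. d \<le> cmod ((\<Sum>k<N. w^(r*2^k)) / of_nat N - complex_of_real (g (p*r)))}
     = measure \<sigma> ((\<lambda>z. z^p) -` {w. d \<le> cmod ((\<Sum>k<N. w^(r*2^k)) / of_nat N - complex_of_real (g (p*r)))} \<inter> space \<sigma>)"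
    by (rule measure_distr[OF mp sm])
  also have "(\<lambda>z. z^p) -` {w. d \<le> cmod ((\<Sum>k<N. w^(r*2^k)) / of_nat N - complex_of_real (g (p*r)))} \<inter> space \<sigma>
      = {z \<in> space \<sigma>. d^2 \<le> (cmod (F z))^2}"
    using d sq_le_iff[of "cmod (F _)" d] by (auto simp: Fp)
  also have "measure \<sigma> {z \<in> space \<sigma>. d^2 \<le> (cmod (F z))^2} \<le> (\<integral>z. (cmod (F z))^2 \<partial>\<sigma>) / d^2"
  proof (rule integral_Markov_inequality_measure[where A="space \<sigma>"])
    show "integrable \<sigma> (\<lambda>z. (cmod (F z))^2)" unfolding F_def by (rule intg_sq)
  qed (use d in auto)
  also have "\<dots> \<le> (3 * 2^(p*r+1) / N) / d^2"
    using L2[OF N, of "p*r"] d unfolding F_def by (intro divide_right_mono) auto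
  finally show ?thesis by (simp add: field_simps)
qed


lemma sing:
  fixes p q r :: nat
  assumes ab: "g (p*r) \<noteq> g (q*r)"
  shows "mutually_singular (distr \<sigma> borel (\<lambda>z. z^p)) (distr \<sigma> borel (\<lambda>z. z^q))"
proof -
  interpret P: prob_space \<sigma> by (rule ps)
  define a where "a = g (p*r)"
  define b where "b = g (q*r)"
  define d where "d = \<bar>a - b\<bar> / 2"
  have d: "d > 0" unfolding d_def a_def b_def using ab by simp
  define S where "S j w = (\<Sum>k<2^j. w^(r*2^k)) / of_nat (2^j) - complex_of_real a" for j w
  define T where "T j w = (\<Sum>k<2^j. w^(r*2^k)) / of_nat (2^j) - complex_of_real b" for j w
  define E where "E j = {w. d \<le> cmod (S j w)}" for j
  define G where "G j = {w. d \<le> cmod (T j w)}" for j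
  define \<mu> where "\<mu> = distr \<sigma> borel (\<lambda>z::complex. z^p)"
  define \<nu> where "\<nu> = distr \<sigma> borel (\<lambda>z::complex. z^q)"
  have mp: "(\<lambda>z::complex. z^p) \<in> measurable \<sigma> borel" by (intro meas) measurable
  have mq: "(\<lambda>z::complex. z^q) \<in> measurable \<sigma> borel" by (intro meas) measurable
  interpret M: prob_space \<mu> unfolding \<mu>_def by (rule P.prob_space_distr[OF mp])
  interpret Nu: prob_space \<nu> unfolding \<nu>_def by (rule P.prob_space_distr[OF mq])
  have setsM: "sets \<mu> = sets borel" "sets \<nu> = sets borel" unfolding \<mu>_def \<nu>_def by simp_all
  have spM: "space \<mu> = UNIV" "space \<nu> = UNIV" unfolding \<mu>_def \<nu>_def by simp_all
  have Eb: "E j \<in> sets borel" for j unfolding E_def S_def by measurable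
  have Gb: "G j \<in> sets borel" for j unfolding G_def T_def by measurable
  have Em: "measure \<mu> (E j) \<le> (3 * 2^(p*r+1) / d^2) * (1/2)^j" for j
  proof -
    have "measure \<mu> (E j) \<le> 3 * 2^(p*r+1) / (real (2^j) * d^2)"
      unfolding \<mu>_def E_def S_def a_def using bad_bound[of "2^j" d p r] d by simp
    also have "\<dots> = (3 * 2^(p*r+1) / d^2) * (1/2)^j" by (simp add: power_divide field_simps)
    finally show ?thesis .
  qed
  have Gm: "measure \<nu> (G j) \<le> (3 * 2^(q*r+1) / d^2) * (1/2)^j" for j
  proof -
    have "measure \<nu> (G j) \<le> 3 * 2^(q*r+1) / (real (2^j) * d^2)"
      unfolding \<nu>_def G_def T_def b_def using bad_bound[of "2^j" d q r] d by simp
    also have "\<dots> = (3 * 2^(q*r+1) / d^2) * (1/2)^j" by (simp add: power_divide field_simps)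
    finally show ?thesis .
  qed
  have sumE: "summable (\<lambda>j. measure \<mu> (E j))"
    by (rule summable_comparison_test[where g="\<lambda>j. (3 * 2^(p*r+1) / d^2) * (1/2)^j"])
       (use Em in auto)
  have sumG: "summable (\<lambda>j. measure \<nu> (G j))"
    by (rule summable_comparison_test[where g="\<lambda>j. (3 * 2^(q*r+1) / d^2) * (1/2)^j"])
       (use Gm in auto)
  have finM: "emeasure \<mu> X < \<infinity>" for X
    unfolding infinity_ennreal_def using M.emeasure_finite[of X] top.not_eq_extremum by blast
  have finN: "emeasure \<nu> X < \<infinity>" for X
    unfolding infinity_ennreal_def using Nu.emeasure_finite[of X] top.not_eq_extremum by blast
  have aeE: "AE w in \<mu>. eventually (\<lambda>j. w \<in> space \<mu> - E j) sequentially"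
  proof (rule borel_cantelli_AE1)
    show "E n \<in> sets \<mu>" for n using Eb setsM(1) by simp
  qed (rule finM, rule sumE)
  have aeG: "AE w in \<nu>. eventually (\<lambda>j. w \<in> space \<nu> - G j) sequentially"
  proof (rule borel_cantelli_AE1)
    show "G n \<in> sets \<nu>" for n using Gb setsM(2) by simp
  qed (rule finN, rule sumG)
  define A where "A = {w. \<exists>J. \<forall>j\<ge>J. w \<notin> G j}"
  have Ab: "A \<in> sets borel"
  proof -
    have "A = (\<Union>J. \<Inter>j\<in>{J..}. UNIV - G j)" unfolding A_def by auto
    also have "\<dots> \<in> sets borel"
      using Gb by (intro sets.countable_UN sets.countable_INT' sets.compl_sets) auto
    finally show ?thesis .
  qed
  have ab2: "cmod (complex_of_real a - complex_of_real b) = 2*d"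
    unfolding d_def by (simp flip: of_real_diff)
  have AE1: "AE w in \<mu>. w \<notin> A"
    using aeE
  proof eventually_elim
    case (elim w)
    show ?case
    proof
      assume "w \<in> A"
      then have "eventually (\<lambda>j. w \<notin> G j) sequentially"
        unfolding A_def eventually_sequentially by auto
      with elim have "eventually (\<lambda>j. w \<notin> E j \<and> w \<notin> G j) sequentially"
        by eventually_elim auto
      then obtain J where "\<forall>j\<ge>J. w \<notin> E j \<and> w \<notin> G j" unfolding eventually_sequentially by blast
      then have j: "w \<notin> E J" "w \<notin> G J" by auto
      then have "cmod (S J w) < d" "cmod (T J w) < d" unfolding E_def G_def by auto
      moreover have "complex_of_real a - complex_of_real b = T J w - S J w"
        unfolding S_def T_def by simp
      moreover have "cmod (T J w - S J w) \<le> cmod (T J w) + cmod (S J w)" by (rule norm_triangle_ineq4)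
      ultimately have "cmod (complex_of_real a - complex_of_real b) \<le> cmod (T J w) + cmod (S J w)" by simp
      then have "2*d \<le> cmod (T J w) + cmod (S J w)" using ab2 by simp
      then show False using \<open>cmod (S J w) < d\<close> \<open>cmod (T J w) < d\<close> by linarith
    qed
  qed
  have AE2: "AE w in \<nu>. w \<in> A"
    using aeG
  proof eventually_elim
    case (elim w)
    then show ?case unfolding A_def eventually_sequentially by auto
  qed
  have z1: "emeasure \<mu> A = 0"
  proof -
    have Am: "A \<in> sets \<mu>" using Ab setsM by simp
    have "{x \<in> space \<mu>. \<not> x \<notin> A} = A" using spM by simp
    from AE_iff_measurable[OF Am this] AE1 show ?thesis by simp
  qed
  have z2: "emeasure \<nu> (space \<nu> - A) = 0"
  proof -
    have Am: "space \<nu> - A \<in> sets \<nu>" using Ab setsM by auto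
    have "{x \<in> space \<nu>. \<not> x \<in> A} = space \<nu> - A" by blast
    from AE_iff_measurable[OF Am this] AE2 show ?thesis by simp
  qed
  have "A \<in> sets \<mu>" using Ab setsM by simp
  then show ?thesis unfolding mutually_singular_def \<mu>_def[symmetric] \<nu>_def[symmetric]
    using z1 z2 by blast
qed

end



declare s2.simps[simp del]

lemma s2_ev: "s2 (2*n) = s2 n"
proof (cases "n = 0")
  case True then show ?thesis by simp
next
  case False
  then show ?thesis by (subst s2.simps) (simp del: s2.simps)
qed

lemma s2_od: "s2 (2*n+1) = s2 n + 1"
  by (subst s2.simps) (simp del: s2.simps)

lemma tm_ev: "tm (2*n) = tm n" unfolding tm_def by (simp only: s2_ev)
lemma tm_od: "tm (2*n+1) = - tm n" unfolding tm_def s2_od by simp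
lemma tm_sq: "tm n * tm n = 1"
proof -
  have "tm n * tm n = (-1::real)^(2 * s2 n)" unfolding tm_def by (simp add: mult_2 power_add)
  also have "\<dots> = 1" by (simp add: power_mult)
  finally show ?thesis .
qed
lemma tm_abs: "\<bar>tm n\<bar> = 1" unfolding tm_def by simp

definition Bs :: "nat \<Rightarrow> nat \<Rightarrow> real" where "Bs k N = (\<Sum>n<N. tm (n+k) * tm n)"

lemma sum_shift: "(\<Sum>n<(N::nat). f n) = (\<Sum>n=1..N. f n) + f 0 - (f N :: real)"
proof (induction N)
  case 0 then show ?case by simp
next
  case (Suc N)
  then show ?case by (simp add: sum.atLeast1_atMost_eq)
qed

lemma Bs_ev: "Bs (2*k) (2*N) = 2 * Bs k N"
proof (induction N)
  case 0 then show ?case by (simp add: Bs_def)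
next
  case (Suc N)
  have step: "Bs (2*k) (2*Suc N) = Bs (2*k) (2*N) + tm (2*N + 2*k) * tm (2*N) + tm (2*N+1 + 2*k) * tm (2*N+1)"
    by (simp add: Bs_def)
  have step2: "Bs k (Suc N) = Bs k N + tm (N+k) * tm N" by (simp add: Bs_def)
  have a1: "tm (2*N + 2*k) = tm (N+k)" using tm_ev[of "N+k"] by (simp add: algebra_simps)
  have a2: "tm (2*N+1 + 2*k) = - tm (N+k)" using tm_od[of "N+k"] by (simp add: algebra_simps)
  show ?case unfolding step step2 a1 a2 tm_ev tm_od Suc.IH by (simp add: algebra_simps)
qed

lemma Bs_od: "Bs (2*k+1) (2*N) = -(Bs k N + Bs (k+1) N)"
proof (induction N)
  case 0 then show ?case by (simp add: Bs_def)
next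
  case (Suc N)
  have step: "Bs (2*k+1) (2*Suc N) = Bs (2*k+1) (2*N) + tm (2*N + (2*k+1)) * tm (2*N) + tm (2*N+1 + (2*k+1)) * tm (2*N+1)"
    by (simp add: Bs_def)
  have step2: "Bs k (Suc N) = Bs k N + tm (N+k) * tm N" by (simp add: Bs_def)
  have step3: "Bs (k+1) (Suc N) = Bs (k+1) N + tm (N+(k+1)) * tm N" by (simp add: Bs_def)
  have a1: "tm (2*N + (2*k+1)) = - tm (N+k)" using tm_od[of "N+k"] by (simp add: algebra_simps)
  have a2: "tm (2*N+1 + (2*k+1)) = tm (N+(k+1))" using tm_ev[of "N+(k+1)"] by (simp add: algebra_simps)
  show ?case unfolding step step2 step3 a1 a2 tm_ev tm_od Suc.IH by (simp add: algebra_simps)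
qed

lemma from_TM:
  assumes H: "TM_spectral_measure \<sigma>"
  defines "\<gamma> \<equiv> \<lambda>k. Re (\<integral>z. (cnj z)^k \<partial>\<sigma>)"
  shows "tmsig \<gamma> \<sigma>"
proof -
  have sS: "sets \<sigma> = sets borel" and ps: "prob_space \<sigma>" and sph: "\<sigma> (sphere 0 1) = 1"
    and lim: "\<And>k. ((\<lambda>N. complex_of_real ((1 / real N) * (\<Sum>n=1..N. tm (n + k) * tm n)))
            \<longlonglongrightarrow> (\<integral>z. (cnj z) ^ k \<partial>\<sigma>))"
    and zc: "\<And>k. (\<integral>z. z ^ k \<partial>\<sigma>) = (\<integral>z. (cnj z) ^ k \<partial>\<sigma>)"
    using H unfolding TM_spectral_measure_def by auto
  interpret P: prob_space \<sigma> by (rule ps)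
  define h where "h k N = (1 / real N) * (\<Sum>n=1..N. tm (n + k) * tm n)" for k N
  have Lreal: "(\<integral>z. (cnj z)^k \<partial>\<sigma>) = complex_of_real (\<gamma> k)" and hlim: "h k \<longlonglongrightarrow> \<gamma> k" for k
  proof -
    have l: "(\<lambda>N. complex_of_real (h k N)) \<longlonglongrightarrow> (\<integral>z. (cnj z)^k \<partial>\<sigma>)" using lim[of k] unfolding h_def .
    have "(\<lambda>N. Im (complex_of_real (h k N))) \<longlonglongrightarrow> Im (\<integral>z. (cnj z)^k \<partial>\<sigma>)" by (rule tendsto_Im[OF l])
    then have "(\<lambda>N. 0) \<longlonglongrightarrow> Im (\<integral>z. (cnj z)^k \<partial>\<sigma>)" by simp
    then have im0: "Im (\<integral>z. (cnj z)^k \<partial>\<sigma>) = 0" using LIMSEQ_unique tendsto_const by blast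
    show "(\<integral>z. (cnj z)^k \<partial>\<sigma>) = complex_of_real (\<gamma> k)" unfolding \<gamma>_def using im0 by (simp add: complex_eq_iff)
    have "(\<lambda>N. Re (complex_of_real (h k N))) \<longlonglongrightarrow> Re (\<integral>z. (cnj z)^k \<partial>\<sigma>)" by (rule tendsto_Re[OF l])
    then show "h k \<longlonglongrightarrow> \<gamma> k" unfolding \<gamma>_def by simp
  qed
  define R where "R k N = Bs k N / real N" for k N
  have Rlim: "R k \<longlonglongrightarrow> \<gamma> k" for k
  proof -
    have e: "R k N = h k N + (tm k * tm 0 - tm (N+k) * tm N) / real N" for N
      unfolding R_def h_def Bs_def sum_shift[where N=N and f="\<lambda>n. tm (n+k) * tm n"] by (simp add: add_divide_distrib[symmetric] algebra_simps)
    have "(\<lambda>N. (tm k * tm 0 - tm (N+k) * tm N) / real N) \<longlonglongrightarrow> 0"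
    proof (rule Lim_null_comparison)
      show "\<forall>\<^sub>F N in sequentially. norm ((tm k * tm 0 - tm (N+k) * tm N) / real N) \<le> 2 / real N"
      proof (rule always_eventually, rule allI)
        fix N
        have "\<bar>tm k * tm 0 - tm (N+k) * tm N\<bar> \<le> 2"
          using tm_abs[of k] tm_abs[of 0] tm_abs[of "N+k"] tm_abs[of N]
        proof -
          have "\<bar>tm k * tm 0\<bar> = 1" "\<bar>tm (N+k) * tm N\<bar> = 1" by (simp_all add: abs_mult tm_abs)
          then show ?thesis using abs_triangle_ineq4[of "tm k * tm 0" "tm (N+k) * tm N"] by linarith
        qed
        then show "norm ((tm k * tm 0 - tm (N+k) * tm N) / real N) \<le> 2 / real N"
          by (simp add: divide_right_mono)
      qed
      show "(\<lambda>N. 2 / real N) \<longlonglongrightarrow> 0" by (rule lim_const_over_n)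
    qed
    then have "(\<lambda>N. h k N + (tm k * tm 0 - tm (N+k) * tm N) / real N) \<longlonglongrightarrow> \<gamma> k + 0"
      by (intro tendsto_add hlim)
    then show ?thesis unfolding e[symmetric] by simp
  qed
  have sm: "strict_mono (\<lambda>N::nat. 2*N)" by (auto simp: strict_mono_def)
  have gev: "\<gamma> (2*k) = \<gamma> k" for k
  proof -
    have "(R (2*k) \<circ> (\<lambda>N. 2*N)) \<longlonglongrightarrow> \<gamma> (2*k)" by (rule LIMSEQ_subseq_LIMSEQ[OF Rlim sm])
    moreover have "(R (2*k) \<circ> (\<lambda>N. 2*N)) = R k"
      by (rule ext) (simp add: R_def Bs_ev)
    ultimately have "R k \<longlonglongrightarrow> \<gamma> (2*k)" by simp
    then show ?thesis using Rlim[of k] LIMSEQ_unique by blast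
  qed
  have god: "\<gamma> (2*k+1) = -(\<gamma> k + \<gamma> (k+1))/2" for k
  proof -
    have "(R (2*k+1) \<circ> (\<lambda>N. 2*N)) \<longlonglongrightarrow> \<gamma> (2*k+1)" by (rule LIMSEQ_subseq_LIMSEQ[OF Rlim sm])
    moreover have "(R (2*k+1) \<circ> (\<lambda>N. 2*N)) = (\<lambda>N. -(R k N + R (k+1) N)/2)"
    proof (rule ext)
      fix N
      have eq: "Bs (2*k+1) (2*N) = -(Bs k N + Bs (k+1) N)" by (rule Bs_od)
      show "(R (2*k+1) \<circ> (\<lambda>N. 2*N)) N = -(R k N + R (k+1) N)/2"
      proof -
        have ar: "-(x+y)/(real (2*N)) = -(x/real N + y/real N)/2" for x y :: real
          by (cases "N = 0") (simp_all add: field_simps)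
        show ?thesis unfolding comp_def R_def eq ar ..
      qed
    qed
    ultimately have "(\<lambda>N. -(R k N + R (k+1) N)/2) \<longlonglongrightarrow> \<gamma> (2*k+1)" by simp
    moreover have "(\<lambda>N. -(R k N + R (k+1) N)/2) \<longlonglongrightarrow> -(\<gamma> k + \<gamma> (k+1))/2"
      by (intro tendsto_intros Rlim) simp
    ultimately show ?thesis using LIMSEQ_unique by blast
  qed
  have g0: "\<gamma> 0 = 1" unfolding \<gamma>_def by (simp add: P.prob_space)
  have AEc: "AE z in \<sigma>. cmod z = 1"
  proof -
    have "P.prob (sphere 0 1) = 1" using sph by (simp add: measure_def)
    then have "AE z in \<sigma>. z \<in> sphere 0 1" by (rule P.AE_prob_1)
    then show ?thesis by eventually_elim simp
  qed
  show ?thesis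
  proof (rule tmsig.intro)
    show "gseq \<gamma>"
    proof (rule gseq.intro)
      show "\<gamma> 0 = 1" by (rule g0)
      show "\<gamma> (2*k) = \<gamma> k" for k by (rule gev)
      show "\<gamma> (2*k+1) = -(\<gamma> k + \<gamma> (k+1))/2" for k by (rule god)
    qed
    show "tmsig_axioms \<gamma> \<sigma>"
    proof (rule tmsig_axioms.intro)
      show "sets \<sigma> = sets borel" by (rule sS)
      show "prob_space \<sigma>" by (rule ps)
      show "AE z in \<sigma>. cmod z = 1" by (rule AEc)
      show "(\<integral>z. z^k \<partial>\<sigma>) = complex_of_real (\<gamma> k)" for k using zc Lreal by simp
      show "(\<integral>z. cnj z ^ k \<partial>\<sigma>) = complex_of_real (\<gamma> k)" for k using Lreal by simp
    qed
  qed
qed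

theorem corollary4p8:
  fixes \<sigma> :: "complex measure" and p q :: nat
  assumes "TM_spectral_measure \<sigma>"
    and "odd p" and "odd q" and "p \<noteq> q"
  shows "mutually_singular (power_image \<sigma> p) (power_image \<sigma> q)"
proof -
  define \<gamma> where "\<gamma> = (\<lambda>k. Re (\<integral>z. (cnj z)^k \<partial>\<sigma>))"
  interpret T: tmsig \<gamma> \<sigma> unfolding \<gamma>_def by (rule from_TM[OF assms(1)])
  obtain r where r: "r \<ge> 1" "\<gamma> (p*r) \<noteq> \<gamma> (q*r)" using T.sep[OF assms(2,3,4)] by blast
  from r(2) show ?thesis unfolding power_image_def by (rule T.sing)
qed


end
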